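(* For every $\varepsilon>0$, $\alpha\geq-\varepsilon$ and $\tau>-1$, the function $r\mapsto r^\alpha\frac{J_{\tau+\varepsilon}(r)}{J_\tau(r)}$ is increasing on $(0,j_\tau)$.
   Context: $J_\tau$ denotes the Bessel function of the first kind of order $\tau$ and $j_\tau$ its first positive zero. *)

theory Defs
  imports "HOL-Analysis.Analysis"
begin

definition besselJ :: "real \<Rightarrow> real \<Rightarrow> real" where
  "besselJ nu x =
     (\<Sum>m. (-1) ^ m / (fact m * Gamma (real m + nu + 1)) * (x / 2) powr (2 * real m + nu))"

definition besselJ_first_zero :: "real \<Rightarrow> real" where
  "besselJ_first_zero nu = Inf {r. 0 < r \<and> besselJ nu r = 0}"

end

theory Submission
  imports Defs
begin



definition cf :: "real \<Rightarrow> nat \<Rightarrow> real" where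
  "cf \<nu> m = (-1)^m / (fact m * Gamma (real m + \<nu> + 1))"

definition GG :: "real \<Rightarrow> real \<Rightarrow> real" where
  "GG \<nu> x = (\<Sum>m. cf \<nu> m * x^m)"

lemma Gamma_pos_shift: "\<nu> > -1 \<Longrightarrow> Gamma (real m + \<nu> + 1) > 0"
  by (intro Gamma_real_pos) linarith

lemma cf_Suc:
  assumes "\<nu> > -1"
  shows "cf \<nu> (Suc m) = - cf \<nu> m / ((real m + 1) * (real m + \<nu> + 1))"
proof -
  have "Gamma (real (Suc m) + \<nu> + 1) = (real m + \<nu> + 1) * Gamma (real m + \<nu> + 1)"
  proof -
    have "real m + \<nu> + 1 \<notin> \<int>\<^sub>\<le>\<^sub>0" using assms by (auto dest!: nonpos_Ints_nonpos)
    then have "Gamma ((real m + \<nu> + 1) + 1) = (real m + \<nu> + 1) * Gamma (real m + \<nu> + 1)"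
      by (rule Gamma_plus1)
    moreover have "real (Suc m) + \<nu> + 1 = (real m + \<nu> + 1) + 1" by simp
    ultimately show ?thesis by simp
  qed
  then show ?thesis
    unfolding cf_def using Gamma_pos_shift[OF assms, of m] assms
    by (simp add: field_simps)
qed

lemma ratio_aux:
  fixes x n \<nu> :: real
  assumes "\<nu> > -1" "2*\<bar>x\<bar> \<le> n" "n \<ge> 0"
  shows "\<bar>x\<bar> / ((n + 1) * (n + \<nu> + 1)) \<le> 1/2"
proof -
  have "2*\<bar>x\<bar> \<le> n" by (rule assms(2))
  also have "\<dots> \<le> (n + 1) * n" using assms(3) by (simp add: algebra_simps)
  also have "\<dots> \<le> (n + 1) * (n + \<nu> + 1)" using assms by (intro mult_left_mono) auto
  finally have a: "2*\<bar>x\<bar> \<le> (n + 1) * (n + \<nu> + 1)" .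
  have b: "(n + 1) * (n + \<nu> + 1) > 0" using assms by simp
  show ?thesis using a b by (simp add: divide_simps)
qed

lemma cf_abs_Suc:
  assumes "\<nu> > -1"
  shows "norm (cf \<nu> (Suc n) * x ^ Suc n) = norm (cf \<nu> n * x ^ n) * (\<bar>x\<bar> / ((real n + 1) * (real n + \<nu> + 1)))"
proof -
  have D: "(real n + 1) * (real n + \<nu> + 1) > 0" using assms by simp
  have 1: "\<bar>cf \<nu> (Suc n)\<bar> = \<bar>cf \<nu> n\<bar> / ((real n + 1) * (real n + \<nu> + 1))"
    unfolding cf_Suc[OF assms] using D by (simp add: abs_divide)
  have 2: "norm (cf \<nu> (Suc n) * x ^ Suc n) = \<bar>cf \<nu> (Suc n)\<bar> * (\<bar>x\<bar> * \<bar>x\<bar>^n)"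
    by (simp add: abs_mult power_abs)
  have 3: "norm (cf \<nu> n * x ^ n) = \<bar>cf \<nu> n\<bar> * \<bar>x\<bar>^n"
    by (simp add: abs_mult power_abs)
  show ?thesis unfolding 2 3 1 by simp
qed

lemma cf_summable:
  assumes "\<nu> > -1"
  shows "summable (\<lambda>m. cf \<nu> m * x^m)"
proof (rule summable_ratio_test[where c="1/2" and N="nat \<lceil>2*\<bar>x\<bar>\<rceil>"])
  fix n assume n: "n \<ge> nat \<lceil>2*\<bar>x\<bar>\<rceil>"
  have n2: "2*\<bar>x\<bar> \<le> real n" using n by linarith
  have r: "\<bar>x\<bar> / ((real n + 1) * (real n + \<nu> + 1)) \<le> 1/2"
    by (rule ratio_aux[OF assms n2]) simp
  show "norm (cf \<nu> (Suc n) * x ^ Suc n) \<le> 1/2 * norm (cf \<nu> n * x ^ n)"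
    unfolding cf_abs_Suc[OF assms] using mult_left_mono[OF r norm_ge_zero[of "cf \<nu> n * x ^ n"]]
    by (simp add: mult.commute)
qed simp

lemma J_GG:
  assumes "\<nu> > -1" "r > 0"
  shows "besselJ \<nu> r = (r/2) powr \<nu> * GG \<nu> ((r/2)^2)"
proof -
  have eq: "(-1) ^ m / (fact m * Gamma (real m + \<nu> + 1)) * (r / 2) powr (2 * real m + \<nu>)
      = (r/2) powr \<nu> * (cf \<nu> m * ((r/2)^2)^m)" for m
  proof -
    have p: "r/2 > 0" using assms by simp
    have "(r / 2) powr (2 * real m + \<nu>) = (r/2) powr (real (2*m)) * (r/2) powr \<nu>"
      by (simp add: powr_add)
    also have "(r/2) powr (real (2*m)) = ((r/2)^2)^m"
      using powr_realpow[OF p, of "2*m"] by (simp add: power_mult)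
    finally have "(r / 2) powr (2 * real m + \<nu>) = (r/2) powr \<nu> * ((r/2)^2)^m" by simp
    then show ?thesis unfolding cf_def by simp
  qed
  show ?thesis unfolding besselJ_def GG_def eq
    by (rule suminf_mult[OF cf_summable[OF assms(1)]])
qed




definition GD :: "real \<Rightarrow> real \<Rightarrow> real" where
  "GD \<nu> x = (\<Sum>n. diffs (cf \<nu>) n * x^n)"

lemma GD_summable: "\<nu> > -1 \<Longrightarrow> summable (\<lambda>n. diffs (cf \<nu>) n * x^n)"
  by (rule termdiff_converges_all) (rule cf_summable)

lemma GG_deriv: "\<nu> > -1 \<Longrightarrow> (GG \<nu> has_field_derivative GD \<nu> x) (at x)"
  unfolding GG_def GD_def
  by (rule termdiffs_strong_converges_everywhere) (rule cf_summable)

lemma GD_deriv: "\<nu> > -1 \<Longrightarrow> (GD \<nu> has_field_derivative (\<Sum>n. diffs (diffs (cf \<nu>)) n * x^n)) (at x)"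
  unfolding GD_def
  by (rule termdiffs_strong_converges_everywhere) (rule GD_summable)

lemma GG_cont: "\<nu> > -1 \<Longrightarrow> isCont (GG \<nu>) x"
  using GG_deriv DERIV_isCont by blast

lemma GD_cont: "\<nu> > -1 \<Longrightarrow> isCont (GD \<nu>) x"
  using GD_deriv DERIV_isCont by blast

lemma H_sums:
  assumes "\<nu> > -1"
  shows "(\<lambda>n. (real n * cf \<nu> n) * x^n) sums (x * GD \<nu> x)"
proof -
  have "(\<lambda>n. x * (diffs (cf \<nu>) n * x^n)) sums (x * GD \<nu> x)"
    unfolding GD_def by (intro sums_mult summable_sums GD_summable assms)
  moreover have "(\<lambda>n. x * (diffs (cf \<nu>) n * x^n)) = (\<lambda>n. (real (Suc n) * cf \<nu> (Suc n)) * x^(Suc n))"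
    by (auto simp: diffs_def)
  ultimately have "(\<lambda>n. (real (Suc n) * cf \<nu> (Suc n)) * x^(Suc n)) sums (x * GD \<nu> x)" by simp
  then show ?thesis
    using sums_Suc_iff[of "\<lambda>n. (real n * cf \<nu> n) * x^n" "x * GD \<nu> x"] by simp
qed

lemma diffs_H_aux:
  fixes a b c \<nu> :: real
  assumes "a > 0" "b > 0" "b = a + \<nu>"
  shows "a * (a * (- c / (a * b))) = - \<nu> * (a * (- c / (a * b))) - c"
proof -
  have "a * (a * (- c / (a * b))) = - a * c / b" using assms(1,2) by (simp add: field_simps)
  moreover have "- \<nu> * (a * (- c / (a * b))) - c = \<nu> * c / b - c" using assms(1,2) by (simp add: field_simps)
  moreover have "\<nu> * c / b - c = (\<nu> - b) * c / b" using assms(1,2) by (simp add: field_simps)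
  ultimately show ?thesis using assms by simp
qed

lemma diffs_H:
  assumes "\<nu> > -1"
  shows "diffs (\<lambda>n. real n * cf \<nu> n) n = - \<nu> * diffs (cf \<nu>) n - cf \<nu> n"
proof -
  have e: "real (Suc n) = real n + 1" by simp
  show ?thesis unfolding diffs_def cf_Suc[OF assms] e
    by (rule diffs_H_aux) (use assms in auto)
qed

lemma H_deriv:
  assumes "\<nu> > -1"
  shows "((\<lambda>x. x * GD \<nu> x) has_field_derivative (- \<nu> * GD \<nu> x - GG \<nu> x)) (at x)"
proof -
  have feq: "(\<lambda>x. x * GD \<nu> x) = (\<lambda>x. \<Sum>n. (real n * cf \<nu> n) * x^n)"
    by (rule ext, rule sums_unique, rule H_sums[OF assms])
  have d: "((\<lambda>x. \<Sum>n. (real n * cf \<nu> n) * x^n) has_field_derivative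
      (\<Sum>n. diffs (\<lambda>n. real n * cf \<nu> n) n * x^n)) (at x)"
    by (rule termdiffs_strong_converges_everywhere) (rule sums_summable, rule H_sums[OF assms])
  have "(\<lambda>n. diffs (\<lambda>n. real n * cf \<nu> n) n * x^n) = (\<lambda>n. (- \<nu>) * (diffs (cf \<nu>) n * x^n) - cf \<nu> n * x^n)"
    by (simp add: diffs_H[OF assms] algebra_simps)
  moreover have "(\<lambda>n. (- \<nu>) * (diffs (cf \<nu>) n * x^n) - cf \<nu> n * x^n) sums (- \<nu> * GD \<nu> x - GG \<nu> x)"
    unfolding GD_def GG_def
    by (intro sums_diff sums_mult summable_sums GD_summable cf_summable assms)
  ultimately have "(\<Sum>n. diffs (\<lambda>n. real n * cf \<nu> n) n * x^n) = - \<nu> * GD \<nu> x - GG \<nu> x"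
    by (simp add: sums_iff)
  with d feq show ?thesis by simp
qed

lemma GG_0: "GG \<nu> 0 = cf \<nu> 0"
  unfolding GG_def by (rule powser_zero)

lemma GD_0: "GD \<nu> 0 = cf \<nu> 1"
proof -
  have "GD \<nu> 0 = diffs (cf \<nu>) 0" unfolding GD_def by (rule powser_zero)
  also have "\<dots> = cf \<nu> 1" unfolding diffs_def by simp
  finally show ?thesis .
qed

lemma cf_0_pos: "\<nu> > -1 \<Longrightarrow> cf \<nu> 0 > 0"
  unfolding cf_def using Gamma_pos_shift[of \<nu> 0] by simp

lemma GD_GG_0:
  assumes "\<nu> > -1"
  shows "GD \<nu> 0 / GG \<nu> 0 = - 1 / (\<nu> + 1)"
proof -
  have "cf \<nu> 1 = - cf \<nu> 0 / (\<nu> + 1)"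
    using cf_Suc[OF assms, of 0] by simp
  then show ?thesis unfolding GG_0 GD_0 using cf_0_pos[OF assms] assms
    by (simp add: field_simps)
qed




definition ww :: "real \<Rightarrow> real \<Rightarrow> real" where
  "ww \<nu> x = x * GD \<nu> x / GG \<nu> x"

definition kk :: "real \<Rightarrow> real \<Rightarrow> real" where
  "kk \<nu> x = x + (ww \<nu> x)^2 + \<nu> * ww \<nu> x"

context
  fixes \<nu> X :: real
  assumes nu: "\<nu> > -1" and Xpos: "X > 0"
    and Gpos: "\<And>x. 0 \<le> x \<Longrightarrow> x < X \<Longrightarrow> GG \<nu> x > 0"
begin

lemma ww_deriv:
  assumes "0 < x" "x < X"
  shows "(ww \<nu> has_field_derivative (- kk \<nu> x / x)) (at x)"
proof -
  have g: "GG \<nu> x > 0" using Gpos assms by simp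
  have d: "(ww \<nu> has_field_derivative
      (((- \<nu> * GD \<nu> x - GG \<nu> x) * GG \<nu> x - x * GD \<nu> x * GD \<nu> x) / (GG \<nu> x * GG \<nu> x))) (at x)"
    unfolding ww_def[abs_def]
    by (rule DERIV_divide[OF H_deriv[OF nu] GG_deriv[OF nu]]) (use g in simp)
  have "((- \<nu> * GD \<nu> x - GG \<nu> x) * GG \<nu> x - x * GD \<nu> x * GD \<nu> x) / (GG \<nu> x * GG \<nu> x)
      = - kk \<nu> x / x"
    unfolding kk_def ww_def using g assms by (simp add: field_simps power2_eq_square)
  with d show ?thesis by simp
qed

lemma ww_cont: "0 < x \<Longrightarrow> x < X \<Longrightarrow> isCont (ww \<nu>) x"
  using ww_deriv DERIV_isCont by blast

lemma kk_deriv: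
  assumes "0 < x" "x < X"
  shows "(kk \<nu> has_field_derivative (1 + (2 * ww \<nu> x + \<nu>) * (- kk \<nu> x / x))) (at x)"
proof -
  have w: "(ww \<nu> has_field_derivative (- kk \<nu> x / x)) (at x)" by (rule ww_deriv[OF assms])
  have "((\<lambda>x. x + ww \<nu> x * ww \<nu> x + \<nu> * ww \<nu> x) has_field_derivative
       (1 + ((- kk \<nu> x / x) * ww \<nu> x + (- kk \<nu> x / x) * ww \<nu> x) + \<nu> * (- kk \<nu> x / x))) (at x)"
    by (intro DERIV_add DERIV_ident DERIV_mult DERIV_cmult w)
  moreover have "(\<lambda>x. x + ww \<nu> x * ww \<nu> x + \<nu> * ww \<nu> x) = kk \<nu>"
    unfolding kk_def[abs_def] by (simp add: power2_eq_square)
  ultimately show ?thesis by (simp add: algebra_simps)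
qed

lemma kk_cont: "0 < x \<Longrightarrow> x < X \<Longrightarrow> isCont (kk \<nu>) x"
  using kk_deriv DERIV_isCont by blast

lemma kk_pos_near0: "\<exists>d>0. \<forall>x. 0 < x \<and> x < d \<longrightarrow> kk \<nu> x > 0"
proof -
  define q where "q x = GD \<nu> x / GG \<nu> x" for x
  define K where "K x = 1 + x * (q x)^2 + \<nu> * q x" for x
  have g0: "GG \<nu> 0 > 0" using Gpos Xpos by simp
  have cq: "isCont q 0" unfolding q_def[abs_def]
    by (intro isCont_divide GD_cont GG_cont nu) (use g0 in simp)
  have cK: "isCont K 0" unfolding K_def[abs_def]
    by (intro continuous_intros cq)
  have K0: "K 0 = 1 / (\<nu> + 1)"
    unfolding K_def q_def GD_GG_0[OF nu] using nu by (simp add: field_simps)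
  have K0pos: "K 0 > 0" using K0 nu by simp
  have "eventually (\<lambda>x. K x > 0) (at 0)"
    using cK K0pos unfolding isCont_def by (rule order_tendstoD(1))
  then obtain d where d: "d > 0" "\<And>x. x \<noteq> 0 \<Longrightarrow> dist x 0 < d \<Longrightarrow> K x > 0"
    unfolding eventually_at by auto
  have "\<forall>x. 0 < x \<and> x < min d X \<longrightarrow> kk \<nu> x > 0"
  proof (intro allI impI)
    fix x assume x: "0 < x \<and> x < min d X"
    have g: "GG \<nu> x > 0" using Gpos x by simp
    have "kk \<nu> x = x * K x"
      unfolding kk_def K_def ww_def q_def using g x by (simp add: field_simps power2_eq_square)
    moreover have "K x > 0" using d x by auto
    ultimately show "kk \<nu> x > 0" using x by simp
  qed
  then show ?thesis using d Xpos by (intro exI[of _ "min d X"]) auto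
qed

lemma kk_pos:
  assumes "0 < x1" "x1 < X"
  shows "kk \<nu> x1 > 0"
proof (rule ccontr)
  assume neg: "\<not> kk \<nu> x1 > 0"
  obtain d where d: "d > 0" "\<And>x. 0 < x \<Longrightarrow> x < d \<Longrightarrow> kk \<nu> x > 0"
    using kk_pos_near0 by auto
  have "x1 \<ge> d" using d neg assms by force
  define a where "a = d / 2"
  have a: "0 < a" "a < x1" "kk \<nu> a > 0" using d \<open>x1 \<ge> d\<close> by (auto simp: a_def)
  have contI: "continuous_on {a..x1} (kk \<nu>)"
    by (intro continuous_at_imp_continuous_on ballI kk_cont) (use a assms in auto)
  define S where "S = {x \<in> {a..x1}. kk \<nu> x = 0}"
  have "closed S" unfolding S_def
    by (rule continuous_closed_preimage_constant[OF contI]) simp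
  have "S = {a..x1} \<inter> S" by (auto simp: S_def)
  then have cS: "compact S"
    using compact_Int_closed[OF compact_Icc[of a x1] \<open>closed S\<close>] by simp
  have "S \<noteq> {}"
  proof -
    obtain z where "a \<le> z" "z \<le> x1" "kk \<nu> z = 0"
      using IVT2'[of "kk \<nu>" x1 0 a] a neg contI by force
    then show ?thesis unfolding S_def by auto
  qed
  then obtain x0 where x0: "x0 \<in> S" "\<And>t. t \<in> S \<Longrightarrow> x0 \<le> t"
    using compact_attains_inf[OF cS] by blast
  have x0a: "a < x0" "x0 \<le> x1" "kk \<nu> x0 = 0"
    using x0(1) a unfolding S_def by (auto simp: order.order_iff_strict)
  have before: "kk \<nu> y > 0" if "a \<le> y" "y < x0" for y
  proof (rule ccontr)
    assume "\<not> kk \<nu> y > 0"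
    moreover have "continuous_on {a..y} (kk \<nu>)"
      using contI by (rule continuous_on_subset) (use that x0a in auto)
    ultimately have "\<exists>z\<ge>a. z \<le> y \<and> kk \<nu> z = 0"
      using IVT2'[of "kk \<nu>" y 0 a] a that by simp
    then obtain z where "a \<le> z" "z \<le> y" "kk \<nu> z = 0" by blast
    then have "z \<in> S" unfolding S_def using that x0a by auto
    then have "x0 \<le> z" by (rule x0(2))
    with \<open>z \<le> y\<close> \<open>y < x0\<close> show False by simp
  qed
  have dk: "(kk \<nu> has_field_derivative 1) (at x0)"
    using kk_deriv[of x0] x0a a assms by simp
  obtain e where e: "e > 0" "\<And>h. h > 0 \<Longrightarrow> h < e \<Longrightarrow> kk \<nu> (x0 - h) < kk \<nu> x0"
    using DERIV_pos_inc_left[OF dk] by auto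
  define h where "h = min e (x0 - a) / 2"
  have h: "h > 0" "h < e" "h \<le> x0 - a" using e x0a by (auto simp: h_def)
  have "kk \<nu> (x0 - h) < 0" using e(2)[OF h(1,2)] x0a by simp
  moreover have "kk \<nu> (x0 - h) > 0" using before[of "x0 - h"] h by simp
  ultimately show False by simp
qed

lemma ww_decreasing:
  assumes "0 < x" "x < y" "y < X"
  shows "ww \<nu> y < ww \<nu> x"
proof (rule DERIV_neg_imp_decreasing_open[OF assms(2)])
  fix z assume "x < z" "z < y"
  then show "\<exists>l. (ww \<nu> has_real_derivative l) (at z) \<and> l < 0"
    using ww_deriv[of z] kk_pos[of z] assms by (intro exI[of _ "- kk \<nu> z / z"]) auto
next
  show "continuous_on {x..y} (ww \<nu>)"
    by (intro continuous_at_imp_continuous_on ballI ww_cont) (use assms in auto)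
qed

lemma ratio_increasing:
  assumes s: "0 < s" "s < 1" and xy: "0 < x" "x < y" "y < X"
  shows "GG \<nu> (s * x) / GG \<nu> x < GG \<nu> (s * y) / GG \<nu> y"
proof (rule DERIV_pos_imp_increasing_open[OF xy(2)])
  fix z assume z: "x < z" "z < y"
  have z0: "0 < z" "z < X" using z xy by auto
  have sz: "0 < s * z" "s * z < z" using s z0 by auto
  have g1: "GG \<nu> z > 0" and g2: "GG \<nu> (s*z) > 0" using Gpos z0 sz by auto
  have d: "((\<lambda>z. GG \<nu> (s * z) / GG \<nu> z) has_field_derivative
      ((GD \<nu> (s*z) * s) * GG \<nu> z - GG \<nu> (s*z) * GD \<nu> z) / (GG \<nu> z * GG \<nu> z)) (at z)"
    by (rule DERIV_divide[OF DERIV_chain2[OF GG_deriv[OF nu]] GG_deriv[OF nu]])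
       (use g1 in \<open>auto intro!: derivative_eq_intros\<close>)
  have "ww \<nu> z < ww \<nu> (s*z)" using ww_decreasing[of "s*z" z] sz z0 by simp
  then have "z * GD \<nu> z / GG \<nu> z < s * z * GD \<nu> (s*z) / GG \<nu> (s*z)" unfolding ww_def .
  then have "z * (GD \<nu> z * GG \<nu> (s*z)) < z * (s * GD \<nu> (s*z) * GG \<nu> z)"
    using g1 g2 by (simp add: field_simps)
  then have "GD \<nu> z * GG \<nu> (s*z) < s * GD \<nu> (s*z) * GG \<nu> z" using z0 by simp
  then have "0 < ((GD \<nu> (s*z) * s) * GG \<nu> z - GG \<nu> (s*z) * GD \<nu> z) / (GG \<nu> z * GG \<nu> z)"
    using g1 by (simp add: algebra_simps)
  with d show "\<exists>l. ((\<lambda>z. GG \<nu> (s * z) / GG \<nu> z) has_real_derivative l) (at z) \<and> 0 < l" by blast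
next
  show "continuous_on {x..y} (\<lambda>z. GG \<nu> (s * z) / GG \<nu> z)"
  proof (intro continuous_at_imp_continuous_on ballI)
    fix z assume z: "z \<in> {x..y}"
    have "GG \<nu> z > 0" using Gpos z xy by auto
    then show "isCont (\<lambda>z. GG \<nu> (s * z) / GG \<nu> z) z"
      by (intro continuous_intros GG_cont nu isCont_o2[OF _ GG_cont[OF nu]]) (use \<open>GG \<nu> z > 0\<close> in auto)
  qed
qed

end




lemma cf_abs_summable:
  assumes "\<nu> > -1"
  shows "summable (\<lambda>m. \<bar>cf \<nu> m\<bar> * \<bar>x\<bar>^m)"
proof -
  have "summable (\<lambda>n. norm (cf \<nu> n * \<bar>x\<bar> ^ n))"
    by (rule powser_insidea[OF cf_summable[OF assms, of "\<bar>x\<bar> + 1"]]) simp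
  then show ?thesis by (simp add: abs_mult power_abs)
qed

lemma cf_Beta:
  assumes "\<nu> > -1" "\<epsilon> > 0"
  shows "cf \<nu> m * Beta (real m + \<nu> + 1) \<epsilon> = Gamma \<epsilon> * cf (\<nu> + \<epsilon>) m"
proof -
  have g: "Gamma (real m + \<nu> + 1) > 0" by (rule Gamma_pos_shift[OF assms(1)])
  have e: "real m + \<nu> + 1 + \<epsilon> = real m + (\<nu> + \<epsilon>) + 1" by simp
  show ?thesis unfolding cf_def Beta_def e using g by (simp add: field_simps)
qed

lemma wt_integral:
  fixes \<nu> \<epsilon> :: real
  assumes "\<nu> > -1" "\<epsilon> > 0"
  shows "((\<lambda>s. s powr \<nu> * (1 - s) powr (\<epsilon> - 1)) has_integral Beta (\<nu> + 1) \<epsilon>) {0..1}"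
  using has_integral_Beta_real[of "\<nu> + 1" \<epsilon>] assms by simp

lemma term_integral:
  assumes "\<nu> > -1" "\<epsilon> > 0"
  shows "((\<lambda>s. cf \<nu> m * (s * x)^m * (s powr \<nu> * (1 - s) powr (\<epsilon> - 1)))
     has_integral (Gamma \<epsilon> * cf (\<nu> + \<epsilon>) m * x^m)) {0..1}"
proof -
  have B: "((\<lambda>s. s powr (real m + \<nu>) * (1 - s) powr (\<epsilon> - 1)) has_integral Beta (real m + \<nu> + 1) \<epsilon>) {0..1}"
    using has_integral_Beta_real[of "real m + \<nu> + 1" \<epsilon>] assms by simp
  have B2: "((\<lambda>s. (cf \<nu> m * x^m) * (s powr (real m + \<nu>) * (1 - s) powr (\<epsilon> - 1)))
      has_integral ((cf \<nu> m * x^m) * Beta (real m + \<nu> + 1) \<epsilon>)) {0..1}"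
    by (rule has_integral_mult_right[OF B])
  have eqv: "(cf \<nu> m * x^m) * Beta (real m + \<nu> + 1) \<epsilon> = Gamma \<epsilon> * cf (\<nu> + \<epsilon>) m * x^m"
    using cf_Beta[OF assms, of m] by (simp add: algebra_simps)
  have pt: "cf \<nu> m * (s * x)^m * (s powr \<nu> * (1 - s) powr (\<epsilon> - 1))
      = (cf \<nu> m * x^m) * (s powr (real m + \<nu>) * (1 - s) powr (\<epsilon> - 1))" if "s \<in> {0..1}" for s
  proof (cases "s = 0")
    case True then show ?thesis by simp
  next
    case False
    then have "s > 0" using that by simp
    then have "s powr (real m + \<nu>) = s^m * s powr \<nu>" by (simp add: powr_add powr_realpow)
    then show ?thesis by (simp add: power_mult_distrib algebra_simps)
  qed
  show ?thesis
    using B2 unfolding eqv by (subst has_integral_cong[OF pt]) auto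
qed

lemma sonine:
  assumes nu: "\<nu> > -1" and ep: "\<epsilon> > 0"
  shows "((\<lambda>s. GG \<nu> (s * x) * (s powr \<nu> * (1 - s) powr (\<epsilon> - 1)))
     has_integral (Gamma \<epsilon> * GG (\<nu> + \<epsilon>) x)) {0..1}"
proof -
  define wt where "wt s = s powr \<nu> * (1 - s) powr (\<epsilon> - 1)" for s
  define f where "f k s = (\<Sum>m<k. cf \<nu> m * (s * x)^m) * wt s" for k s
  define M where "M = (\<Sum>m. \<bar>cf \<nu> m\<bar> * \<bar>x\<bar>^m)"
  have fi: "(f k has_integral (\<Sum>m<k. Gamma \<epsilon> * cf (\<nu> + \<epsilon>) m * x^m)) {0..1}" for k
  proof -
    have "((\<lambda>s. \<Sum>m<k. cf \<nu> m * (s * x)^m * wt s) has_integral (\<Sum>m<k. Gamma \<epsilon> * cf (\<nu> + \<epsilon>) m * x^m)) {0..1}"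
      by (rule has_integral_sum) (use term_integral[OF nu ep] in \<open>auto simp: wt_def\<close>)
    then show ?thesis unfolding f_def by (simp add: sum_distrib_right)
  qed
  have wt_nn: "wt s \<ge> 0" for s unfolding wt_def by simp
  have h: "(\<lambda>s. M * wt s) integrable_on {0..1}"
    using has_integral_mult_right[OF wt_integral[OF nu ep], of M] unfolding wt_def
    by blast
  have le: "norm (f k s) \<le> M * wt s" if "s \<in> {0..1}" for k s
  proof -
    have "\<bar>\<Sum>m<k. cf \<nu> m * (s * x)^m\<bar> \<le> (\<Sum>m<k. \<bar>cf \<nu> m\<bar> * \<bar>x\<bar>^m)"
    proof -
      have "\<bar>\<Sum>m<k. cf \<nu> m * (s * x)^m\<bar> \<le> (\<Sum>m<k. \<bar>cf \<nu> m * (s * x)^m\<bar>)"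
        by (rule sum_abs)
      also have "\<dots> \<le> (\<Sum>m<k. \<bar>cf \<nu> m\<bar> * \<bar>x\<bar>^m)"
      proof (rule sum_mono)
        fix m assume "m \<in> {..<k}"
        have "\<bar>s\<bar>^m \<le> 1" using that by (simp add: power_le_one)
        then have "\<bar>s\<bar>^m * \<bar>x\<bar>^m \<le> \<bar>x\<bar>^m" by (simp add: mult_left_le_one_le)
        moreover have "\<bar>cf \<nu> m * (s * x)^m\<bar> = \<bar>cf \<nu> m\<bar> * (\<bar>s\<bar>^m * \<bar>x\<bar>^m)"
          by (simp add: abs_mult power_mult_distrib power_abs)
        ultimately show "\<bar>cf \<nu> m * (s * x)^m\<bar> \<le> \<bar>cf \<nu> m\<bar> * \<bar>x\<bar>^m"
          by (simp add: mult_left_mono)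
      qed
      finally show ?thesis .
    qed
    also have "\<dots> \<le> M" unfolding M_def
      by (rule sum_le_suminf[OF cf_abs_summable[OF nu]]) auto
    finally have "\<bar>\<Sum>m<k. cf \<nu> m * (s * x)^m\<bar> \<le> M" .
    then show ?thesis unfolding f_def using wt_nn[of s]
      by (simp add: abs_mult mult_right_mono)
  qed
  have conv: "(\<lambda>k. f k s) \<longlonglongrightarrow> GG \<nu> (s * x) * wt s" for s
    unfolding f_def GG_def
    by (intro tendsto_mult_right summable_LIMSEQ cf_summable nu)
  have DC: "(\<lambda>s. GG \<nu> (s * x) * wt s) integrable_on {0..1}"
    "(\<lambda>k. integral {0..1} (f k)) \<longlonglongrightarrow> integral {0..1} (\<lambda>s. GG \<nu> (s * x) * wt s)"
    using dominated_convergence[of f "{0..1}" "\<lambda>s. M * wt s" "\<lambda>s. GG \<nu> (s * x) * wt s"]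
      fi h le conv by (auto simp: has_integral_integrable)
  have "(\<lambda>k. integral {0..1} (f k)) \<longlonglongrightarrow> Gamma \<epsilon> * GG (\<nu> + \<epsilon>) x"
  proof -
    have "(\<lambda>k. \<Sum>m<k. Gamma \<epsilon> * (cf (\<nu> + \<epsilon>) m * x^m)) \<longlonglongrightarrow> Gamma \<epsilon> * GG (\<nu> + \<epsilon>) x"
      unfolding GG_def sum_distrib_left[symmetric]
      by (intro tendsto_mult_left summable_LIMSEQ cf_summable) (use nu ep in simp)
    moreover have "integral {0..1} (f k) = (\<Sum>m<k. Gamma \<epsilon> * (cf (\<nu> + \<epsilon>) m * x^m))" for k
      using integral_unique[OF fi[of k]] by (simp add: mult.assoc)
    ultimately show ?thesis by simp
  qed
  then have "integral {0..1} (\<lambda>s. GG \<nu> (s * x) * wt s) = Gamma \<epsilon> * GG (\<nu> + \<epsilon>) x"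
    using DC(2) LIMSEQ_unique by blast
  with DC(1) show ?thesis unfolding wt_def
    using integrable_integral by fastforce
qed




lemma integral_pos01:
  fixes D :: "real \<Rightarrow> real"
  assumes I: "(D has_integral I) {0..1}" and nn: "\<And>s. s \<in> {0..1} \<Longrightarrow> D s \<ge> 0"
    and c: "continuous_on {1/4..3/4} D" and p: "\<And>s. s \<in> {1/4..3/4} \<Longrightarrow> D s > 0"
  shows "I > 0"
proof -
  have i01: "D integrable_on {0..1}" using I by blast
  have i2: "D integrable_on {1/4..3/4}"
    by (rule integrable_subinterval_real[OF i01]) auto
  have "integral {1/4..3/4} D \<le> integral {0..1} D"
    by (rule integral_subset_le[OF _ i2 i01]) (use nn in auto)
  also have "\<dots> = I" using I by (rule integral_unique)
  finally have le: "integral {1/4..3/4} D \<le> I" .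
  have ge: "integral {1/4..3/4} D \<ge> 0"
    by (rule integral_nonneg[OF i2]) (use p in \<open>auto simp: less_imp_le\<close>)
  have "integral {1/4..3/4} D \<noteq> 0"
  proof
    assume z: "integral {1/4..3/4} D = 0"
    have hi: "(D has_integral 0) (cbox (1/4) (3/4))"
      using i2 z by (metis cbox_interval has_integral_integral)
    have "D (1/2) = 0"
    proof (rule has_integral_0_cbox_imp_0[OF _ _ hi])
      show "continuous_on (cbox (1/4) (3/4)) D" using c by (simp add: cbox_interval)
      show "\<And>x. x \<in> box (1/4) (3/4) \<Longrightarrow> 0 \<le> D x" using p by (auto simp: box_real less_imp_le)
      show "box (1/4::real) (3/4) \<noteq> {}" by (simp add: box_real)
      show "(1/2::real) \<in> cbox (1/4) (3/4)" by (simp add: cbox_interval)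
    qed
    moreover have "D (1/2) > 0" using p by simp
    ultimately show False by simp
  qed
  with ge le show ?thesis by simp
qed

lemma J_nonzero:
  assumes "0 < r" "r < besselJ_first_zero \<tau>"
  shows "besselJ \<tau> r \<noteq> 0"
proof
  assume "besselJ \<tau> r = 0"
  then have "r \<in> {r. 0 < r \<and> besselJ \<tau> r = 0}" using assms by simp
  moreover have "bdd_below {r. 0 < r \<and> besselJ \<tau> r = 0}"
    by (rule bdd_belowI[of _ 0]) auto
  ultimately have "besselJ_first_zero \<tau> \<le> r"
    unfolding besselJ_first_zero_def by (rule cInf_lower)
  with assms show False by simp
qed

context
  fixes \<tau> \<epsilon> :: real
  assumes tau: "\<tau> > -1" and ep: "\<epsilon> > 0" and jpos: "besselJ_first_zero \<tau> > 0"
begin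

definition "jj = besselJ_first_zero \<tau>"
definition "XX = (jj/2)^2"

lemma XX_pos: "XX > 0" using jpos unfolding XX_def jj_def by simp

lemma GG_nonzero:
  assumes "0 < y" "y < XX"
  shows "GG \<tau> y \<noteq> 0"
proof -
  define r where "r = 2 * sqrt y"
  have r0: "r > 0" using assms by (simp add: r_def)
  have "sqrt y < sqrt ((jj/2)^2)" using assms unfolding XX_def by (intro real_sqrt_less_mono)
  also have "sqrt ((jj/2)^2) = jj/2" using jpos unfolding jj_def by simp
  finally have "r < jj" unfolding r_def by simp
  then have "besselJ \<tau> r \<noteq> 0" using J_nonzero[OF r0] unfolding jj_def by simp
  moreover have "(r/2)^2 = y" using assms unfolding r_def by simp
  ultimately show ?thesis using J_GG[OF tau r0] by auto
qed

lemma GG_pos: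
  assumes "0 \<le> y" "y < XX"
  shows "GG \<tau> y > 0"
proof (rule ccontr)
  assume neg: "\<not> GG \<tau> y > 0"
  have g0: "GG \<tau> 0 > 0" using GG_0 cf_0_pos[OF tau] by simp
  then have y0: "y > 0" using neg assms by (cases "y = 0") auto
  have "continuous_on {0..y} (GG \<tau>)"
    by (intro continuous_at_imp_continuous_on ballI GG_cont tau)
  then have "\<exists>z\<ge>0. z \<le> y \<and> GG \<tau> z = 0"
    using IVT2'[of "GG \<tau>" y 0 0] neg g0 y0 by simp
  then obtain z where z: "0 \<le> z" "z \<le> y" "GG \<tau> z = 0" by blast
  then have "z \<noteq> 0" using g0 by auto
  then show False using GG_nonzero[of z] z assms by simp
qed

definition "wt s = s powr \<tau> * (1 - s) powr (\<epsilon> - 1)"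

lemma wt_pos: "0 < s \<Longrightarrow> s < 1 \<Longrightarrow> wt s > 0"
  unfolding wt_def by simp

lemma wt_cont: "continuous_on {1/4..3/4} wt"
  unfolding wt_def
  by (intro continuous_at_imp_continuous_on ballI continuous_intros) auto

lemma sonine': "((\<lambda>s. GG \<tau> (s * x) * wt s) has_integral (Gamma \<epsilon> * GG (\<tau> + \<epsilon>) x)) {0..1}"
  unfolding wt_def by (rule sonine[OF tau ep])

lemma sx_in:
  assumes "0 \<le> s" "s \<le> 1" "0 < x" "x < XX"
  shows "0 \<le> s * x" "s * x < XX"
proof -
  show "0 \<le> s * x" using assms by simp
  have "s * x \<le> x" using assms by (intro mult_left_le_one_le) auto
  then show "s * x < XX" using assms(4) by linarith
qed

lemma GG_shift_pos:
  assumes "0 < x" "x < XX"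
  shows "GG (\<tau> + \<epsilon>) x > 0"
proof -
  have "Gamma \<epsilon> * GG (\<tau> + \<epsilon>) x > 0"
  proof (rule integral_pos01[OF sonine'])
    fix s :: real assume s: "s \<in> {0..1}"
    have "GG \<tau> (s * x) > 0" using s assms sx_in[of s x] by (intro GG_pos) auto
    moreover have "wt s \<ge> 0" unfolding wt_def by simp
    ultimately show "GG \<tau> (s * x) * wt s \<ge> 0" by simp
  next
    show "continuous_on {1/4..3/4} (\<lambda>s. GG \<tau> (s * x) * wt s)"
      by (intro continuous_on_mult wt_cont continuous_at_imp_continuous_on ballI
          isCont_o2[OF _ GG_cont[OF tau]] continuous_intros)
  next
    fix s :: real assume s: "s \<in> {1/4..3/4}"
    have "GG \<tau> (s * x) > 0" using s assms sx_in[of s x] by (intro GG_pos) auto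
    moreover have "wt s > 0" using s by (intro wt_pos) auto
    ultimately show "GG \<tau> (s * x) * wt s > 0" by simp
  qed
  moreover have "Gamma \<epsilon> > 0" using ep by (rule Gamma_real_pos)
  ultimately show ?thesis by (simp add: zero_less_mult_iff)
qed

lemma R_mono:
  assumes "0 < x" "x < y" "y < XX"
  shows "GG (\<tau> + \<epsilon>) x / GG \<tau> x < GG (\<tau> + \<epsilon>) y / GG \<tau> y"
proof -
  have gx: "GG \<tau> x > 0" and gy: "GG \<tau> y > 0" using GG_pos assms by auto
  define Df where "Df s = (GG \<tau> (s * y) / GG \<tau> y - GG \<tau> (s * x) / GG \<tau> x) * wt s" for s
  have "(Df has_integral (Gamma \<epsilon> * GG (\<tau> + \<epsilon>) y / GG \<tau> y - Gamma \<epsilon> * GG (\<tau> + \<epsilon>) x / GG \<tau> x)) {0..1}"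
  proof -
    have "((\<lambda>s. GG \<tau> (s * y) * wt s / GG \<tau> y - GG \<tau> (s * x) * wt s / GG \<tau> x) has_integral
      (Gamma \<epsilon> * GG (\<tau> + \<epsilon>) y / GG \<tau> y - Gamma \<epsilon> * GG (\<tau> + \<epsilon>) x / GG \<tau> x)) {0..1}"
      by (intro has_integral_diff has_integral_divide sonine')
    moreover have "(\<lambda>s. GG \<tau> (s * y) * wt s / GG \<tau> y - GG \<tau> (s * x) * wt s / GG \<tau> x) = Df"
      unfolding Df_def by (auto simp: field_simps)
    ultimately show ?thesis by simp
  qed
  moreover have "Gamma \<epsilon> * GG (\<tau> + \<epsilon>) y / GG \<tau> y - Gamma \<epsilon> * GG (\<tau> + \<epsilon>) x / GG \<tau> x > 0"
  proof (rule integral_pos01[OF calculation])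
    fix s :: real assume s: "s \<in> {0..1}"
    show "Df s \<ge> 0"
    proof (cases "s = 0 \<or> s = 1")
      case True then show ?thesis unfolding Df_def wt_def using gx gy by auto
    next
      case False
      then have "0 < s" "s < 1" using s by auto
      then have "GG \<tau> (s * x) / GG \<tau> x < GG \<tau> (s * y) / GG \<tau> y"
        by (intro ratio_increasing[OF tau XX_pos] GG_pos assms) auto
      moreover have "wt s > 0" using \<open>0 < s\<close> \<open>s < 1\<close> by (rule wt_pos)
      ultimately show ?thesis unfolding Df_def by simp
    qed
  next
    show "continuous_on {1/4..3/4} Df"
      unfolding Df_def using gx gy
      by (intro continuous_on_mult wt_cont continuous_at_imp_continuous_on ballI
          isCont_o2[OF _ GG_cont[OF tau]] continuous_intros) auto
  next
    fix s :: real assume s: "s \<in> {1/4..3/4}"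
    then have "0 < s" "s < 1" by auto
    then have "GG \<tau> (s * x) / GG \<tau> x < GG \<tau> (s * y) / GG \<tau> y"
      by (intro ratio_increasing[OF tau XX_pos] GG_pos assms) auto
    moreover have "wt s > 0" using \<open>0 < s\<close> \<open>s < 1\<close> by (rule wt_pos)
    ultimately show "Df s > 0" unfolding Df_def by simp
  qed
  moreover have "Gamma \<epsilon> > 0" using ep by (rule Gamma_real_pos)
  ultimately have "Gamma \<epsilon> * (GG (\<tau> + \<epsilon>) x / GG \<tau> x) < Gamma \<epsilon> * (GG (\<tau> + \<epsilon>) y / GG \<tau> y)"
    by (simp only: times_divide_eq_right)
  then show ?thesis using \<open>Gamma \<epsilon> > 0\<close> by (simp only: mult_less_cancel_left_pos)
qed

lemma f_formula:
  assumes "0 < r"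
  shows "r powr \<alpha> * besselJ (\<tau> + \<epsilon>) r / besselJ \<tau> r
     = (r powr (\<alpha> + \<epsilon>) / 2 powr \<epsilon>) * (GG (\<tau> + \<epsilon>) ((r/2)^2) / GG \<tau> ((r/2)^2))"
proof -
  have p: "(r/2) powr \<tau> > 0" using assms by simp
  have "r powr \<alpha> * besselJ (\<tau> + \<epsilon>) r / besselJ \<tau> r
     = r powr \<alpha> * ((r/2) powr \<tau> * (r/2) powr \<epsilon> * GG (\<tau> + \<epsilon>) ((r/2)^2)) / ((r/2) powr \<tau> * GG \<tau> ((r/2)^2))"
    using J_GG[of "\<tau> + \<epsilon>" r] J_GG[OF tau assms] tau ep assms by (simp add: powr_add)
  also have "\<dots> = (r powr \<alpha> * (r/2) powr \<epsilon>) * (GG (\<tau> + \<epsilon>) ((r/2)^2) / GG \<tau> ((r/2)^2))"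
    using p by (simp add: field_simps)
  also have "r powr \<alpha> * (r/2) powr \<epsilon> = r powr (\<alpha> + \<epsilon>) / 2 powr \<epsilon>"
    using assms by (simp add: powr_divide powr_add)
  finally show ?thesis .
qed

lemma main_mono:
  assumes al: "\<alpha> \<ge> - \<epsilon>" and r: "0 < r1" "r1 < r2" "r2 < besselJ_first_zero \<tau>"
  shows "r1 powr \<alpha> * besselJ (\<tau> + \<epsilon>) r1 / besselJ \<tau> r1
       < r2 powr \<alpha> * besselJ (\<tau> + \<epsilon>) r2 / besselJ \<tau> r2"
proof -
  define x1 where "x1 = (r1/2)^2"
  define x2 where "x2 = (r2/2)^2"
  have x: "0 < x1" "x1 < x2" "x2 < XX"
  proof -
    show "0 < x1" using r unfolding x1_def by simp
    show "x1 < x2" unfolding x1_def x2_def using r by (intro power_strict_mono) auto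
    show "x2 < XX" unfolding x2_def XX_def jj_def using r by (intro power_strict_mono) auto
  qed
  define c1 where "c1 = r1 powr (\<alpha> + \<epsilon>) / 2 powr \<epsilon>"
  define c2 where "c2 = r2 powr (\<alpha> + \<epsilon>) / 2 powr \<epsilon>"
  define R1 where "R1 = GG (\<tau> + \<epsilon>) x1 / GG \<tau> x1"
  define R2 where "R2 = GG (\<tau> + \<epsilon>) x2 / GG \<tau> x2"
  have c: "0 < c1" "c1 \<le> c2" unfolding c1_def c2_def using r al
    by (auto intro!: divide_right_mono powr_mono2)
  have R: "R1 < R2" unfolding R1_def R2_def by (rule R_mono[OF x])
  have R1: "R1 > 0" unfolding R1_def using GG_shift_pos[of x1] GG_pos[of x1] x by simp
  have "c1 * R1 < c1 * R2" using c R by simp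
  also have "\<dots> \<le> c2 * R2" using c R R1 by (intro mult_right_mono) auto
  finally have "c1 * R1 < c2 * R2" .
  then show ?thesis
    using f_formula[of r1 \<alpha>] f_formula[of r2 \<alpha>] r
    unfolding c1_def c2_def R1_def R2_def x1_def x2_def by simp
qed

end

theorem lemmaA1:
  fixes \<epsilon> \<alpha> \<tau> :: real
  assumes "\<epsilon> > 0" and "\<alpha> \<ge> - \<epsilon>" and "\<tau> > -1"
  shows "strict_mono_on {0<..<besselJ_first_zero \<tau>}
           (\<lambda>r. r powr \<alpha> * besselJ (\<tau> + \<epsilon>) r / besselJ \<tau> r)"
proof (cases "besselJ_first_zero \<tau> > 0")
  case True
  show ?thesis unfolding strict_mono_on_def
    using main_mono[OF assms(3,1) True assms(2)] by auto
next
  case False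
  then show ?thesis unfolding strict_mono_on_def by auto
qed


end
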